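(* Let $p=p(n)$ with $p/n\to y\in(0,\infty)$, and let $L=L_{T^{(s)}}$, $L(i,j)=|i-j|$. Let $\omega$ be a word of length $2k$ with $b$ distinct letters and $r+1$ even generating vertices. Then the limit $\lim_{n\to\infty}|\Pi_{S_{T^{(s)}}}(\omega)|/(p^{r+1}n^{b-r})$ exists, and it is strictly positive if and only if $\omega$ is an even word (otherwise it equals $0$).
   Context: Words: a word of length $m$ is a sequence of letters whose distinct letters first appear in alphabetical order. A word is even if each distinct letter appears an even number of times. Circuits for $S_A$ with link function $L$ (a function on pairs of positive integers): maps $\pi:\{0,\dots,2k\}\to\mathbb N$ with $\pi(0)=\pi(2k)$, $1\le\pi(2i)\le p$, $1\le\pi(2i-1)\le n$; set $\xi_\pi(2i-1)=L(\pi(2i-2),\pi(2i-1))$ and $\xi_\pi(2i)=L(\pi(2i),\pi(2i-1))$. For a word $\omega$ of length $2k$, $\Pi_{S_A}(\omega)=\{\pi:\ \omega[i]=\omega[j]\iff\xi_\pi(i)=\xi_\pi(j)\ \forall i,j\}$. The vertex $\pi(i)$ is generating if $i=0$ or $\omega[i]$ is the first occurrence of its letter; it is even if $i$ is even. *)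

theory Defs
  imports Complex_Main
begin

text \<open>Words are lists of letters (natural numbers 0,1,2,... standing for a,b,c,...).
 A word omega of length m is indexed in the paper as omega[1..m]; here omega[i] = omega ! (i-1).
 The canonical-form condition: distinct letters first appear in alphabetical order.\<close>

definition is_word :: "nat list \<Rightarrow> bool" where
  "is_word w \<longleftrightarrow> (\<forall>i < length w. w ! i \<in> set (take i w) \<or> w ! i = card (set (take i w)))"

definition even_word :: "nat list \<Rightarrow> bool" where
  "even_word w \<longleftrightarrow> (\<forall>x \<in> set w. even (count_list w x))"

definition num_letters :: "nat list \<Rightarrow> nat" where
  "num_letters w = card (set w)"

definition generating :: "nat list \<Rightarrow> nat \<Rightarrow> bool" where
  "generating w i \<longleftrightarrow> i = 0 \<or> (1 \<le> i \<and> i \<le> length w \<and> w ! (i - 1) \<notin> set (take (i - 1) w))"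

definition num_even_generating :: "nat list \<Rightarrow> nat" where
  "num_even_generating w = card {i \<in> {0..length w}. even i \<and> generating w i}"

text \<open>Circuits pc : {0..2k} \<rightarrow> N represented as lists of length 2k+1.\<close>
definition circuits :: "nat \<Rightarrow> nat \<Rightarrow> nat \<Rightarrow> nat list set" where
  "circuits p n k = {pc. length pc = 2 * k + 1 \<and> pc ! 0 = pc ! (2 * k)
      \<and> (\<forall>i \<le> k. 1 \<le> pc ! (2 * i) \<and> pc ! (2 * i) \<le> p)
      \<and> (\<forall>i \<in> {1..k}. 1 \<le> pc ! (2 * i - 1) \<and> pc ! (2 * i - 1) \<le> n)}"

definition xi :: "(nat \<Rightarrow> nat \<Rightarrow> nat) \<Rightarrow> nat list \<Rightarrow> nat \<Rightarrow> nat" where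
  "xi L pc j = (if odd j then L (pc ! (j - 1)) (pc ! j) else L (pc ! j) (pc ! (j - 1)))"

definition Pi_S :: "(nat \<Rightarrow> nat \<Rightarrow> nat) \<Rightarrow> nat \<Rightarrow> nat \<Rightarrow> nat list \<Rightarrow> nat list set" where
  "Pi_S L p n w = {pc \<in> circuits p n (length w div 2).
      \<forall>i \<in> {1..length w}. \<forall>j \<in> {1..length w}.
        (w ! (i - 1) = w ! (j - 1) \<longleftrightarrow> xi L pc i = xi L pc j)}"

definition L_T :: "nat \<Rightarrow> nat \<Rightarrow> nat" where
  "L_T i j = (if i \<le> j then j - i else i - j)"

end

theory Submission
  imports Defs "HOL-Analysis.Analysis"
begin


abbreviation LB :: "real measure" where "LB \<equiv> lborel"

lemma psf_lborel: "product_sigma_finite (\<lambda>_::'i. LB)"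
  by (simp add: product_sigma_finite_def lborel.sigma_finite_measure_axioms)

lemma hyper_null:
  fixes c :: "'i \<Rightarrow> real"
  assumes fin: "finite I" and jI: "j \<in> I" and cj: "c j \<noteq> 0"
  shows "AE u in PiM I (\<lambda>_. LB). (\<Sum>i\<in>I. c i * u i) \<noteq> t"
proof -
  interpret product_sigma_finite "\<lambda>_::'i. LB" by (rule psf_lborel)
  define J where "J = I - {j}"
  have IJ: "I = insert j J" "j \<notin> J" "finite J" using jI fin by (auto simp: J_def)
  define N where "N = {u \<in> space (PiM I (\<lambda>_. LB)). (\<Sum>i\<in>I. c i * u i) = t}"
  have Nm: "N \<in> sets (PiM I (\<lambda>_. LB))" unfolding N_def by measurable
  have "emeasure (PiM I (\<lambda>_. LB)) N = (\<integral>\<^sup>+ u. indicator N u \<partial>PiM I (\<lambda>_. LB))"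
    using Nm by simp
  also have "\<dots> = (\<integral>\<^sup>+ x. (\<integral>\<^sup>+ y. indicator N (x(j := y)) \<partial>LB) \<partial>PiM J (\<lambda>_. LB))"
    unfolding IJ(1) by (rule product_nn_integral_insert) (use IJ Nm in auto)
  also have "\<dots> = (\<integral>\<^sup>+ x. 0 \<partial>PiM J (\<lambda>_. LB))"
  proof (intro nn_integral_cong)
    fix x assume x: "x \<in> space (PiM J (\<lambda>_. LB))"
    define y0 where "y0 = (t - (\<Sum>i\<in>J. c i * x i)) / c j"
    have "\<And>y. indicator N (x(j := y)) = (indicator {y0} y :: ennreal)"
    proof -
      fix y
      have sp: "x(j := y) \<in> space (PiM I (\<lambda>_. LB))"
        using x IJ by (auto simp: space_PiM PiE_def extensional_def)
      have "(\<Sum>i\<in>I. c i * (x(j := y)) i) = c j * y + (\<Sum>i\<in>J. c i * x i)"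
        unfolding IJ(1) using IJ by (simp add: sum.insert) (intro sum.cong, auto)
      then have "x(j := y) \<in> N \<longleftrightarrow> y = y0"
        using sp cj unfolding N_def y0_def by (auto simp: field_simps)
      then show "indicator N (x(j := y)) = (indicator {y0} y :: ennreal)"
        by (simp add: indicator_def)
    qed
    then show "(\<integral>\<^sup>+ y. indicator N (x(j := y)) \<partial>LB) = 0" by simp
  qed
  finally have "emeasure (PiM I (\<lambda>_. LB)) N = 0" by simp
  then show ?thesis
    by (subst AE_iff_measurable[OF Nm]) (auto simp: N_def)
qed


definition fl :: "'i set \<Rightarrow> nat \<Rightarrow> ('i \<Rightarrow> real) \<Rightarrow> 'i \<Rightarrow> int" where
  "fl I n u = restrict (\<lambda>i. \<lfloor>real n * u i\<rfloor>) I"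

definition cube :: "'i set \<Rightarrow> nat \<Rightarrow> ('i \<Rightarrow> int) \<Rightarrow> ('i \<Rightarrow> real) set" where
  "cube I n z = PiE I (\<lambda>i. {real_of_int (z i) / real n ..< (real_of_int (z i) + 1) / real n})"

lemma cube_mem:
  assumes "n > 0" "u \<in> space (PiM I (\<lambda>_. LB))" "z \<in> extensional I"
  shows "u \<in> cube I n z \<longleftrightarrow> fl I n u = z"
proof -
  have fe: "\<And>i. (\<lfloor>real n * u i\<rfloor> = z i) \<longleftrightarrow> (real_of_int (z i) / real n \<le> u i \<and> u i < (real_of_int (z i) + 1) / real n)"
    using assms(1) by (simp add: floor_eq_iff field_simps)
  show ?thesis
    using assms(2,3) unfolding cube_def fl_def
    by (auto simp: space_PiM PiE_iff fe extensional_def restrict_def fun_eq_iff)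
qed

lemma cube_sets: "finite I \<Longrightarrow> cube I n z \<in> sets (PiM I (\<lambda>_. LB))"
  unfolding cube_def by (intro sets_PiM_I_finite) auto

lemma cube_emeasure:
  assumes "finite I" "n > 0"
  shows "emeasure (PiM I (\<lambda>_. LB)) (cube I n z) = ennreal ((1 / real n) ^ card I)"
proof -
  interpret product_sigma_finite "\<lambda>_::'i. LB" by (rule psf_lborel)
  have "emeasure (PiM I (\<lambda>_. LB)) (cube I n z) = (\<Prod>i\<in>I. emeasure LB {real_of_int (z i) / real n ..< (real_of_int (z i) + 1) / real n})"
    unfolding cube_def using assms by (subst emeasure_PiM) auto
  also have "\<dots> = (\<Prod>i\<in>I. ennreal (1 / real n))"
    using assms by (intro prod.cong) (auto simp: field_simps diff_divide_distrib)
  also have "\<dots> = ennreal ((1 / real n) ^ card I)"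
    by (simp add: prod_ennreal ennreal_power)
  finally show ?thesis .
qed

lemma cube_measure:
  assumes "finite I" "n > 0"
  shows "measure (PiM I (\<lambda>_. LB)) (cube I n z) = (1 / real n) ^ card I"
  using cube_emeasure[OF assms] by (simp add: measure_def)


lemma step_eq:
  assumes "n > 0" "u \<in> space (PiM I (\<lambda>_. LB))" "Z \<subseteq> extensional I" "finite Z"
  shows "(\<Sum>z\<in>Z. g z * indicator (cube I n z) u) = (if fl I n u \<in> Z then g (fl I n u) else (0::real))"
proof -
  have "(\<Sum>z\<in>Z. g z * indicator (cube I n z) u) = (\<Sum>z\<in>Z. if z = fl I n u then g z else 0)"
    using assms by (intro sum.cong) (auto simp: indicator_def cube_mem subset_iff)
  also have "\<dots> = (if fl I n u \<in> Z then g (fl I n u) else 0)"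
    using assms(4) by (simp add: sum.delta')
  finally show ?thesis .
qed

lemma step_integral:
  assumes "finite I" "n > 0" "finite Z"
  shows "integrable (PiM I (\<lambda>_. LB)) (\<lambda>u. \<Sum>z\<in>Z. g z * indicator (cube I n z) u)"
    and "integral\<^sup>L (PiM I (\<lambda>_. LB)) (\<lambda>u. \<Sum>z\<in>Z. g z * indicator (cube I n z) u)
          = (\<Sum>z\<in>Z. g z) * (1 / real n) ^ card I"
proof -
  have fin: "\<And>z. emeasure (PiM I (\<lambda>_. LB)) (cube I n z) < \<infinity>"
    using cube_emeasure[OF assms(1,2)] by simp
  have int1: "\<And>z. integrable (PiM I (\<lambda>_. LB)) (\<lambda>u. g z * indicator (cube I n z) u)"
    using fin cube_sets[OF assms(1)] by (intro integrable_mult_right integrable_real_indicator) auto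
  show "integrable (PiM I (\<lambda>_. LB)) (\<lambda>u. \<Sum>z\<in>Z. g z * indicator (cube I n z) u)"
    by (rule Bochner_Integration.integrable_sum, rule int1)
  have "integral\<^sup>L (PiM I (\<lambda>_. LB)) (\<lambda>u. \<Sum>z\<in>Z. g z * indicator (cube I n z) u)
     = (\<Sum>z\<in>Z. integral\<^sup>L (PiM I (\<lambda>_. LB)) (\<lambda>u. g z * indicator (cube I n z) u))"
    by (rule Bochner_Integration.integral_sum, rule int1)
  also have "\<dots> = (\<Sum>z\<in>Z. g z * (1 / real n) ^ card I)"
    using fin cube_sets[OF assms(1)] cube_measure[OF assms(1,2)] by (intro sum.cong) auto
  finally show "integral\<^sup>L (PiM I (\<lambda>_. LB)) (\<lambda>u. \<Sum>z\<in>Z. g z * indicator (cube I n z) u)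
          = (\<Sum>z\<in>Z. g z) * (1 / real n) ^ card I"
    by (simp add: sum_distrib_right)
qed

lemma riemann:
  fixes g :: "nat \<Rightarrow> ('i \<Rightarrow> int) \<Rightarrow> real"
  assumes fI: "finite I"
    and fZ: "\<And>n. finite (Z n)"
    and Zb: "\<And>n. Z n \<subseteq> {z \<in> extensional I. \<forall>i\<in>I. 0 \<le> z i \<and> real_of_int (z i) \<le> C * real (Suc n)}"
    and gb: "\<And>n z. 0 \<le> g n z \<and> g n z \<le> B"
    and Gm: "G \<in> borel_measurable (PiM I (\<lambda>_. LB))"
    and lim: "AE u in PiM I (\<lambda>_. LB). (\<lambda>n. if fl I (Suc n) u \<in> Z n then g n (fl I (Suc n) u) else 0) \<longlonglongrightarrow> G u"
  shows "integrable (PiM I (\<lambda>_. LB)) G"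
    and "(\<lambda>n. (\<Sum>z\<in>Z n. g n z) / real (Suc n) ^ card I) \<longlonglongrightarrow> integral\<^sup>L (PiM I (\<lambda>_. LB)) G"
proof -
  define M where "M = PiM I (\<lambda>_. LB)"
  define s where "s n u = (\<Sum>z\<in>Z n. g n z * indicator (cube I (Suc n) z) u)" for n u
  define box where "box = PiE I (\<lambda>_::'i. {0..\<bar>C\<bar>+1::real})"
  define w where "w u = B * indicator box u" for u
  have sm: "s n \<in> borel_measurable M" for n
    using step_integral(1)[OF fI _ fZ] unfolding s_def M_def by (intro borel_measurable_integrable) auto
  have boxs: "box \<in> sets M" unfolding box_def M_def by (intro sets_PiM_I_finite) (auto simp: fI)
  interpret product_sigma_finite "\<lambda>_::'i. LB" by (rule psf_lborel)
  have "emeasure M box = (\<Prod>i\<in>I. emeasure LB {0..\<bar>C\<bar>+1})"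
    unfolding M_def box_def using fI by (subst emeasure_PiM) auto
  then have boxf: "emeasure M box < \<infinity>" by (simp add: power_eq_top_ennreal less_top[symmetric])
  have wi: "integrable M w" unfolding w_def
    using boxs boxf by (intro integrable_mult_right integrable_real_indicator) auto
  have Bnn: "0 \<le> B" using gb[of 0 undefined] by linarith
  have bound: "AE u in M. norm (s n u) \<le> w u" for n
  proof (rule AE_I2)
    fix u assume u: "u \<in> space M"
    have se: "s n u = (if fl I (Suc n) u \<in> Z n then g n (fl I (Suc n) u) else 0)"
      unfolding s_def using u Zb fZ unfolding M_def by (intro step_eq) auto
    show "norm (s n u) \<le> w u"
    proof (cases "fl I (Suc n) u \<in> Z n")
      case False then show ?thesis using se Bnn by (simp add: w_def)
    next
      case True
      define z where "z = fl I (Suc n) u"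
      have zZ: "z \<in> Z n" using True z_def by simp
      have "u \<in> cube I (Suc n) z" using u Zb zZ unfolding M_def z_def by (subst cube_mem) auto
      moreover have "cube I (Suc n) z \<subseteq> box"
      proof
        fix v assume v: "v \<in> cube I (Suc n) z"
        have "v i \<in> {0..\<bar>C\<bar>+1}" if i: "i \<in> I" for i
        proof -
          have b: "0 \<le> z i" "real_of_int (z i) \<le> C * real (Suc n)" using Zb zZ i by auto
          have v1: "real_of_int (z i) / real (Suc n) \<le> v i" "v i < (real_of_int (z i) + 1) / real (Suc n)"
            using v i unfolding cube_def by auto
          have "0 \<le> real_of_int (z i) / real (Suc n)" using b by simp
          moreover have "(real_of_int (z i) + 1) / real (Suc n) \<le> \<bar>C\<bar> + 1"
          proof -
            have "real_of_int (z i) + 1 \<le> \<bar>C\<bar> * real (Suc n) + real (Suc n)"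
              using b(2) by (smt (verit) abs_ge_self mult_right_mono of_nat_0_le_iff of_nat_Suc)
            then show ?thesis by (simp add: field_simps)
          qed
          ultimately show ?thesis using v1 by auto
        qed
        then show "v \<in> box" using v unfolding box_def cube_def by (auto simp: PiE_iff)
      qed
      ultimately have "u \<in> box" by auto
      then show ?thesis using se True gb[of n z] by (simp add: w_def z_def)
    qed
  qed
  have lim': "AE u in M. (\<lambda>n. s n u) \<longlonglongrightarrow> G u"
    using lim unfolding M_def
  proof (rule AE_mp, intro AE_I2 impI)
    fix u assume u: "u \<in> space (PiM I (\<lambda>_. LB))"
      and l: "(\<lambda>n. if fl I (Suc n) u \<in> Z n then g n (fl I (Suc n) u) else 0) \<longlonglongrightarrow> G u"
    have "s n u = (if fl I (Suc n) u \<in> Z n then g n (fl I (Suc n) u) else 0)" for n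
      unfolding s_def using u Zb fZ by (intro step_eq) auto
    then show "(\<lambda>n. s n u) \<longlonglongrightarrow> G u" using l by simp
  qed
  have Gm': "G \<in> borel_measurable M" using Gm M_def by simp
  show "integrable (PiM I (\<lambda>_. LB)) G"
    using integrable_dominated_convergence[OF Gm' sm wi lim' bound] M_def by simp
  have "(\<lambda>n. integral\<^sup>L M (s n)) \<longlonglongrightarrow> integral\<^sup>L M G"
    by (rule integral_dominated_convergence[OF Gm' sm wi lim' bound])
  moreover have "integral\<^sup>L M (s n) = (\<Sum>z\<in>Z n. g n z) / real (Suc n) ^ card I" for n
    unfolding M_def s_def using step_integral(2)[OF fI _ fZ, of "Suc n"]
    by (simp add: power_one_over)
  ultimately show "(\<lambda>n. (\<Sum>z\<in>Z n. g n z) / real (Suc n) ^ card I) \<longlonglongrightarrow> integral\<^sup>L (PiM I (\<lambda>_. LB)) G"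
    using M_def by simp
qed


definition D :: "nat list \<Rightarrow> nat \<Rightarrow> int" where
  "D pc t = \<bar>int (pc ! Suc t) - int (pc ! t)\<bar>"

lemma xi_LT: "1 \<le> j \<Longrightarrow> int (xi L_T pc j) = D pc (j - 1)"
  by (cases j) (auto simp: xi_def L_T_def D_def)

lemma circuits_alt:
  "pc \<in> circuits P N k \<longleftrightarrow> length pc = 2 * k + 1 \<and> pc ! 0 = pc ! (2 * k) \<and>
     (\<forall>j \<le> 2 * k. 1 \<le> pc ! j \<and> pc ! j \<le> (if even j then P else N))"
proof -
  have "(\<forall>i \<le> k. 1 \<le> pc ! (2 * i) \<and> pc ! (2 * i) \<le> P) \<and>
      (\<forall>i \<in> {1..k}. 1 \<le> pc ! (2 * i - 1) \<and> pc ! (2 * i - 1) \<le> N) \<longleftrightarrow>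
      (\<forall>j \<le> 2 * k. 1 \<le> pc ! j \<and> pc ! j \<le> (if even j then P else N))"
  proof safe
    fix j assume a: "\<forall>i \<le> k. 1 \<le> pc ! (2 * i) \<and> pc ! (2 * i) \<le> P"
      "\<forall>i \<in> {1..k}. 1 \<le> pc ! (2 * i - 1) \<and> pc ! (2 * i - 1) \<le> N" "j \<le> 2 * k"
    show "1 \<le> pc ! j" "pc ! j \<le> (if even j then P else N)"
    proof -
      have "1 \<le> pc ! j \<and> pc ! j \<le> (if even j then P else N)"
      proof (cases "even j")
        case True then obtain i where "j = 2 * i" by blast
        then show ?thesis using a True by auto
      next
        case False then obtain i where i: "j = 2 * i + 1" using oddE by blast
        then have "Suc i \<in> {1..k}" using a(3) by auto
        moreover have "2 * Suc i - 1 = j" using i by simp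
        ultimately show ?thesis using a(2) False by force
      qed
      then show "1 \<le> pc ! j" "pc ! j \<le> (if even j then P else N)" by auto
    qed
  next
    fix i assume a: "\<forall>j\<le>2 * k. 1 \<le> pc ! j \<and> pc ! j \<le> (if even j then P else N)"
    { assume "i \<le> k" then show "1 \<le> pc ! (2 * i)" "pc ! (2 * i) \<le> P" using a[rule_format, of "2*i"] by auto }
    { assume "i \<in> {1..k}" then show "1 \<le> pc ! (2 * i - 1)" "pc ! (2 * i - 1) \<le> N"
        using a[rule_format, of "2*i - 1"] by auto }
  qed
  then show ?thesis unfolding circuits_def by auto
qed

lemma Pi_S_alt:
  assumes "length w = 2 * k"
  shows "pc \<in> Pi_S L_T P N w \<longleftrightarrow> length pc = length w + 1 \<and> pc ! 0 = pc ! length w \<and>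
     (\<forall>j \<le> length w. 1 \<le> pc ! j \<and> pc ! j \<le> (if even j then P else N)) \<and>
     (\<forall>t < length w. \<forall>t' < length w. w ! t = w ! t' \<longleftrightarrow> D pc t = D pc t')"
proof -
  have k: "length w div 2 = k" using assms by simp
  have "(\<forall>i \<in> {1..length w}. \<forall>j \<in> {1..length w}.
        (w ! (i - 1) = w ! (j - 1) \<longleftrightarrow> xi L_T pc i = xi L_T pc j)) \<longleftrightarrow>
       (\<forall>t < length w. \<forall>t' < length w. w ! t = w ! t' \<longleftrightarrow> D pc t = D pc t')"
  proof safe
    fix t t' assume a: "\<forall>i \<in> {1..length w}. \<forall>j \<in> {1..length w}.
        (w ! (i - 1) = w ! (j - 1) \<longleftrightarrow> xi L_T pc i = xi L_T pc j)" "t < length w" "t' < length w"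
    have e: "xi L_T pc (Suc t) = xi L_T pc (Suc t') \<longleftrightarrow> D pc t = D pc t'"
    proof -
      have h1: "int (xi L_T pc (Suc t)) = D pc t" "int (xi L_T pc (Suc t')) = D pc t'"
        using xi_LT[of "Suc t" pc] xi_LT[of "Suc t'" pc] by auto
      have "xi L_T pc (Suc t) = xi L_T pc (Suc t') \<longleftrightarrow> int (xi L_T pc (Suc t)) = int (xi L_T pc (Suc t'))"
        by (rule of_nat_eq_iff[symmetric])
      then show ?thesis unfolding h1 .
    qed
    show "w ! t = w ! t' \<Longrightarrow> D pc t = D pc t'" "D pc t = D pc t' \<Longrightarrow> w ! t = w ! t'"
      using a(1)[rule_format, of "Suc t" "Suc t'"] a(2,3) e by auto
  next
    fix i j assume a: "\<forall>t < length w. \<forall>t' < length w. w ! t = w ! t' \<longleftrightarrow> D pc t = D pc t'"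
      "i \<in> {1..length w}" "j \<in> {1..length w}"
    have e: "xi L_T pc i = xi L_T pc j \<longleftrightarrow> D pc (i - 1) = D pc (j - 1)"
    proof -
      have h1: "int (xi L_T pc i) = D pc (i - 1)" "int (xi L_T pc j) = D pc (j - 1)"
        using xi_LT[of i pc] xi_LT[of j pc] a(2,3) by auto
      have "xi L_T pc i = xi L_T pc j \<longleftrightarrow> int (xi L_T pc i) = int (xi L_T pc j)"
        by (rule of_nat_eq_iff[symmetric])
      then show ?thesis unfolding h1 .
    qed
    show "w ! (i - 1) = w ! (j - 1) \<Longrightarrow> xi L_T pc i = xi L_T pc j"
         "xi L_T pc i = xi L_T pc j \<Longrightarrow> w ! (i - 1) = w ! (j - 1)"
    proof -
      have "i - 1 < length w" "j - 1 < length w" using a(2,3) by auto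
      then have "w ! (i - 1) = w ! (j - 1) \<longleftrightarrow> D pc (i - 1) = D pc (j - 1)" using a(1) by blast
      then show "w ! (i - 1) = w ! (j - 1) \<Longrightarrow> xi L_T pc i = xi L_T pc j"
         "xi L_T pc i = xi L_T pc j \<Longrightarrow> w ! (i - 1) = w ! (j - 1)" using e by auto
    qed
  qed
  then show ?thesis unfolding Pi_S_def k circuits_alt using assms by auto
qed


definition first :: "nat list \<Rightarrow> nat \<Rightarrow> nat" where
  "first w a = (LEAST t. t < length w \<and> w ! t = a)"

definition Idx :: "nat list \<Rightarrow> nat option set" where
  "Idx w = insert None (Some ` set w)"

definition Phi :: "nat list \<Rightarrow> nat list \<Rightarrow> nat option \<Rightarrow> int" where
  "Phi w pc = restrict (\<lambda>i. case i of None \<Rightarrow> int (pc ! 0) | Some a \<Rightarrow> D pc (first w a)) (Idx w)"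

definition Fib :: "nat list \<Rightarrow> nat \<Rightarrow> nat \<Rightarrow> (nat option \<Rightarrow> int) \<Rightarrow> nat list set" where
  "Fib w P N z = {pc \<in> Pi_S L_T P N w. Phi w pc = z}"

lemma first_prop: "a \<in> set w \<Longrightarrow> first w a < length w \<and> w ! first w a = a"
  unfolding first_def by (rule LeastI_ex) (auto simp: in_set_conv_nth)

lemma finite_Idx: "finite (Idx w)" by (simp add: Idx_def)

lemma card_Idx: "card (Idx w) = Suc (card (set w))"
  unfolding Idx_def by (simp add: card_image image_iff)

context
  fixes w :: "nat list" and k :: nat
  assumes lw: "length w = 2 * k"
begin

lemma PiS: "pc \<in> Pi_S L_T P N w \<longleftrightarrow> length pc = length w + 1 \<and> pc ! 0 = pc ! length w \<and>
     (\<forall>j \<le> length w. 1 \<le> pc ! j \<and> pc ! j \<le> (if even j then P else N)) \<and>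
     (\<forall>t < length w. \<forall>t' < length w. w ! t = w ! t' \<longleftrightarrow> D pc t = D pc t')"
  by (rule Pi_S_alt[OF lw])

lemma finite_PiS: "finite (Pi_S L_T P N w)"
proof -
  have "Pi_S L_T P N w \<subseteq> {xs. set xs \<subseteq> {..max P N} \<and> length xs = length w + 1}"
  proof
    fix pc assume pc: "pc \<in> Pi_S L_T P N w"
    have "\<forall>x \<in> set pc. x \<le> max P N"
    proof
      fix x assume "x \<in> set pc"
      then obtain j where j: "j < length pc" "pc ! j = x" by (auto simp: in_set_conv_nth)
      then have "j \<le> length w" using pc PiS by auto
      then have "pc ! j \<le> (if even j then P else N)" using pc PiS by blast
      then show "x \<le> max P N" using j by (auto split: if_splits)
    qed
    then show "pc \<in> {xs. set xs \<subseteq> {..max P N} \<and> length xs = length w + 1}" using pc PiS by auto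
  qed
  moreover have "finite {xs. set xs \<subseteq> {..max P N} \<and> length xs = length w + 1}"
    by (rule finite_lists_length_eq) auto
  ultimately show ?thesis by (rule finite_subset)
qed

lemma card_PiS_sum: "card (Pi_S L_T P N w) = (\<Sum>z \<in> Phi w ` Pi_S L_T P N w. card (Fib w P N z))"
proof -
  have "card (Pi_S L_T P N w) = (\<Sum>pc \<in> Pi_S L_T P N w. 1)" by simp
  also have "\<dots> = (\<Sum>z \<in> Phi w ` Pi_S L_T P N w. \<Sum>pc \<in> {pc \<in> Pi_S L_T P N w. Phi w pc = z}. 1)"
    by (rule sum.group[symmetric]) (auto simp: finite_PiS)
  also have "\<dots> = (\<Sum>z \<in> Phi w ` Pi_S L_T P N w. card (Fib w P N z))"
    unfolding Fib_def by simp
  finally show ?thesis .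
qed

lemma D_first: "pc \<in> Pi_S L_T P N w \<Longrightarrow> t < length w \<Longrightarrow> D pc t = D pc (first w (w ! t))"
  using first_prop[of "w ! t" w] unfolding PiS by auto

lemma Fib_D: "pc \<in> Fib w P N z \<Longrightarrow> t < length w \<Longrightarrow> D pc t = z (Some (w ! t))"
  unfolding Fib_def using D_first by (auto simp: Phi_def Idx_def)

lemma Fib_0: "pc \<in> Fib w P N z \<Longrightarrow> int (pc ! 0) = z None"
  unfolding Fib_def by (auto simp: Phi_def Idx_def)

lemma Fib_step: "pc \<in> Fib w P N z \<Longrightarrow> t < length w \<Longrightarrow>
   int (pc ! Suc t) = int (pc ! t) + (if pc ! t \<le> pc ! Suc t then 1 else -1) * z (Some (w ! t))"
  using Fib_D[of pc P N z t] unfolding D_def by auto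

lemma Zbound: "z \<in> Phi w ` Pi_S L_T P N w \<Longrightarrow>
   z \<in> extensional (Idx w) \<and> (\<forall>i \<in> Idx w. 0 \<le> z i \<and> z i \<le> int (max P N))"
proof -
  assume "z \<in> Phi w ` Pi_S L_T P N w"
  then obtain pc where pc: "pc \<in> Pi_S L_T P N w" "z = Phi w pc" by auto
  have b: "1 \<le> pc ! j \<and> pc ! j \<le> max P N" if "j \<le> length w" for j
    using pc(1) that unfolding PiS by (auto split: if_splits)
  have "0 \<le> z i \<and> z i \<le> int (max P N)" if i: "i \<in> Idx w" for i
  proof (cases i)
    case None then show ?thesis using pc b[of 0] i by (auto simp: Phi_def)
  next
    case (Some a)
    then have a: "a \<in> set w" using i by (auto simp: Idx_def)
    define t where "t = first w a"
    have t: "t < length w" using first_prop[OF a] t_def by auto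
    have "D pc t \<le> int (max P N)" using b[of t] b[of "Suc t"] t unfolding D_def by auto
    then show ?thesis using Some i pc t_def by (auto simp: Phi_def D_def)
  qed
  then show ?thesis using pc by (auto simp: Phi_def)
qed

definition sig :: "nat list \<Rightarrow> bool list" where
  "sig pc = map (\<lambda>t. pc ! t \<le> pc ! Suc t) [0..<length w]"

lemma Fib_determined:
  assumes "pc \<in> Fib w P N z" "pc' \<in> Fib w P N z" "sig pc = sig pc'"
  shows "pc = pc'"
proof -
  have len: "length pc = length w + 1" "length pc' = length w + 1"
    using assms(1,2) unfolding Fib_def PiS by auto
  have "j \<le> length w \<longrightarrow> pc ! j = pc' ! j" for j
  proof (induction j)
    case 0 then show ?case using Fib_0[OF assms(1)] Fib_0[OF assms(2)] by simp
  next
    case (Suc j)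
    show ?case
    proof
      assume j: "Suc j \<le> length w"
      then have e: "(pc ! j \<le> pc ! Suc j) = (pc' ! j \<le> pc' ! Suc j)"
        using assms(3) unfolding sig_def by (metis (no_types, lifting) Suc_le_eq diff_zero length_map length_upt nth_map nth_upt plus_nat.add_0 map_eq_conv)
      have "int (pc ! Suc j) = int (pc' ! Suc j)"
        using Fib_step[OF assms(1), of j] Fib_step[OF assms(2), of j] j e Suc by auto
      then show "pc ! Suc j = pc' ! Suc j" by simp
    qed
  qed
  then show ?thesis using len by (intro nth_equalityI) auto
qed

lemma card_Fib_le: "card (Fib w P N z) \<le> 2 ^ length w"
proof -
  have "inj_on sig (Fib w P N z)" using Fib_determined by (auto simp: inj_on_def)
  moreover have "sig ` Fib w P N z \<subseteq> {s. length s = length w}" by (auto simp: sig_def)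
  moreover have "finite {s :: bool list. length s = length w}"
    using finite_lists_length_eq[of "UNIV :: bool set" "length w"] by simp
  ultimately have "card (Fib w P N z) \<le> card {s :: bool list. length s = length w}"
    by (metis card_inj_on_le)
  also have "\<dots> = 2 ^ length w" using card_lists_length_eq[of "UNIV :: bool set" "length w"] by simp
  finally show ?thesis .
qed

end


definition sg :: "bool \<Rightarrow> int" where "sg b = (if b then 1 else -1)"

definition X :: "nat list \<Rightarrow> (nat option \<Rightarrow> int) \<Rightarrow> bool list \<Rightarrow> nat \<Rightarrow> int" where
  "X w z s j = z None + (\<Sum>t<j. sg (s ! t) * z (Some (w ! t)))"

definition Cnd :: "nat list \<Rightarrow> nat \<Rightarrow> nat \<Rightarrow> (nat option \<Rightarrow> int) \<Rightarrow> bool list \<Rightarrow> bool" where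
  "Cnd w P N z s \<longleftrightarrow> length s = length w \<and> (\<Sum>t<length w. sg (s ! t) * z (Some (w ! t))) = 0 \<and>
     (\<forall>j \<le> length w. 1 \<le> X w z s j \<and> X w z s j \<le> int (if even j then P else N))"

definition path :: "nat list \<Rightarrow> (nat option \<Rightarrow> int) \<Rightarrow> bool list \<Rightarrow> nat list" where
  "path w z s = map (\<lambda>j. nat (X w z s j)) [0..<Suc (length w)]"

lemma X_Suc: "X w z s (Suc j) = X w z s j + sg (s ! j) * z (Some (w ! j))"
  by (simp add: X_def)

lemma sg_abs: "0 \<le> c \<Longrightarrow> \<bar>sg b * c\<bar> = c" by (simp add: sg_def)

context
  fixes w :: "nat list" and k :: nat
  assumes lw: "length w = 2 * k"
begin

lemma card_Fib_eq:
  assumes ze: "z \<in> extensional (Idx w)" and zp: "\<forall>a \<in> set w. 1 \<le> z (Some a)"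
    and zi: "inj_on (\<lambda>a. z (Some a)) (set w)"
  shows "card (Fib w P N z) = card {s. Cnd w P N z s}"
proof -
  have bij: "bij_betw (path w z) {s. Cnd w P N z s} (Fib w P N z)"
  proof (rule bij_betwI')
    fix s s' assume s: "s \<in> {s. Cnd w P N z s}" and s': "s' \<in> {s. Cnd w P N z s}"
    show "(path w z s = path w z s') = (s = s')"
    proof
      assume eq: "path w z s = path w z s'"
      have Xeq: "X w z s j = X w z s' j" if "j \<le> length w" for j
      proof -
        have "path w z s ! j = path w z s' ! j" using eq by simp
        then have "nat (X w z s j) = nat (X w z s' j)" using that
          by (simp add: path_def nth_map del: upt_Suc)
        then show ?thesis using s s' that unfolding Cnd_def
          by (smt (verit) mem_Collect_eq nat_eq_iff2)
      qed
      have "s ! t = s' ! t" if t: "t < length w" for t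
      proof -
        have "sg (s ! t) * z (Some (w ! t)) = sg (s' ! t) * z (Some (w ! t))"
          using Xeq[of t] Xeq[of "Suc t"] t X_Suc[of w z s t] X_Suc[of w z s' t] by simp
        moreover have "z (Some (w ! t)) \<ge> 1" using zp t by auto
        ultimately show ?thesis by (auto simp: sg_def split: if_splits)
      qed
      then show "s = s'" using s s' unfolding Cnd_def by (intro nth_equalityI) auto
    qed simp
  next
    fix s assume s: "s \<in> {s. Cnd w P N z s}"
    then have c: "Cnd w P N z s" by simp
    define pc where "pc = path w z s"
    have len: "length pc = length w + 1" by (simp add: pc_def path_def)
    have pcj: "int (pc ! j) = X w z s j" if "j \<le> length w" for j
    proof -
      have "pc ! j = nat (X w z s j)" using that by (simp add: pc_def path_def nth_map del: upt_Suc)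
      then show ?thesis using c that unfolding Cnd_def by auto
    qed
    have Dt: "D pc t = z (Some (w ! t))" if "t < length w" for t
    proof -
      have "D pc t = \<bar>X w z s (Suc t) - X w z s t\<bar>" unfolding D_def using pcj[of t] pcj[of "Suc t"] that by simp
      also have "\<dots> = z (Some (w ! t))"
      proof -
        have "0 \<le> z (Some (w ! t))" using zp that by (meson nth_mem order_trans zero_le_one)
        then show ?thesis using X_Suc[of w z s t] by (simp add: sg_abs)
      qed
      finally show ?thesis .
    qed
    have "pc \<in> Pi_S L_T P N w"
    proof -
      have "X w z s (length w) = X w z s 0" using c unfolding Cnd_def X_def by simp
      then have "pc ! 0 = pc ! length w" using pcj[of 0] pcj[of "length w"] by simp
      moreover have "\<forall>j \<le> length w. 1 \<le> pc ! j \<and> pc ! j \<le> (if even j then P else N)"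
      proof (intro allI impI)
        fix j assume j: "j \<le> length w"
        then have "1 \<le> X w z s j \<and> X w z s j \<le> int (if even j then P else N)" using c unfolding Cnd_def by blast
        then show "1 \<le> pc ! j \<and> pc ! j \<le> (if even j then P else N)" using pcj[OF j] by auto
      qed
      moreover have "\<forall>t < length w. \<forall>t' < length w. w ! t = w ! t' \<longleftrightarrow> D pc t = D pc t'"
        using Dt zi unfolding inj_on_def by (auto simp: in_set_conv_nth) (metis nth_mem)
      ultimately show ?thesis using len by (subst PiS[OF lw]) auto
    qed
    moreover have "Phi w pc = z"
    proof
      fix i show "Phi w pc i = z i"
      proof (cases "i \<in> Idx w")
        case False then show ?thesis using ze by (simp add: Phi_def extensional_def)
      next
        case True
        show ?thesis
        proof (cases i)
          case None then show ?thesis using True pcj[of 0] by (simp add: Phi_def X_def)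
        next
          case (Some a)
          then have a: "a \<in> set w" using True by (auto simp: Idx_def)
          then show ?thesis using Some True Dt first_prop[OF a] by (simp add: Phi_def)
        qed
      qed
    qed
    ultimately show "path w z s \<in> Fib w P N z" unfolding Fib_def pc_def by simp
  next
    fix pc assume pc: "pc \<in> Fib w P N z"
    have pcS: "pc \<in> Pi_S L_T P N w" using pc unfolding Fib_def by simp
    define s where "s = map (\<lambda>t. pc ! t \<le> pc ! Suc t) [0..<length w]"
    have Xj: "X w z s j = int (pc ! j)" if "j \<le> length w" for j
      using that
    proof (induction j)
      case 0 then show ?case using Fib_0[OF lw pc] by (simp add: X_def)
    next
      case (Suc j)
      then have j: "j < length w" by simp
      have "s ! j = (pc ! j \<le> pc ! Suc j)" using j by (simp add: s_def)
      then show ?case using Suc X_Suc[of w z s j] Fib_step[OF lw pc j] by (simp add: sg_def)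
    qed
    have len: "length pc = length w + 1" using pcS PiS[OF lw] by auto
    have c: "Cnd w P N z s"
    proof -
      have "(\<Sum>t<length w. sg (s ! t) * z (Some (w ! t))) = X w z s (length w) - X w z s 0"
        by (simp add: X_def)
      also have "\<dots> = 0" using Xj[of 0] Xj[of "length w"] pcS PiS[OF lw] by simp
      finally show ?thesis unfolding Cnd_def using Xj pcS PiS[OF lw] by (auto simp: s_def)
    qed
    moreover have "path w z s = pc"
      using len Xj by (intro nth_equalityI) (auto simp: path_def nth_map simp del: upt_Suc)
    ultimately show "\<exists>s \<in> {s. Cnd w P N z s}. pc = path w z s" by auto
  qed
  then show ?thesis by (metis bij_betw_same_card)
qed

end


lemma regroup:
  fixes f :: "nat \<Rightarrow> 'b::comm_ring_1"
  assumes "j \<le> length w"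
  shows "(\<Sum>t<j. f t * v (w ! t)) = (\<Sum>a\<in>set w. (\<Sum>t \<in> {t. t < j \<and> w ! t = a}. f t) * v a)"
proof -
  have "(\<Sum>t<j. f t * v (w ! t)) = (\<Sum>a\<in>set w. \<Sum>t \<in> {t \<in> {..<j}. w ! t = a}. f t * v (w ! t))"
    using assms by (intro sum.group[symmetric]) auto
  also have "\<dots> = (\<Sum>a\<in>set w. (\<Sum>t \<in> {t. t < j \<and> w ! t = a}. f t) * v a)"
    by (intro sum.cong refl) (auto simp: sum_distrib_right intro!: sum.cong)
  finally show ?thesis .
qed

definition cc :: "nat list \<Rightarrow> bool list \<Rightarrow> nat \<Rightarrow> int" where
  "cc w s a = (\<Sum>t \<in> {t. t < length w \<and> w ! t = a}. sg (s ! t))"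

lemma sum_pm1_parity:
  fixes f :: "nat \<Rightarrow> int"
  assumes "finite T" "\<forall>t\<in>T. f t = 1 \<or> f t = -1"
  shows "even (sum f T + int (card T))"
  using assms
proof (induction T rule: finite_induct)
  case empty then show ?case by simp
next
  case (insert x F)
  then have "sum f (insert x F) + int (card (insert x F)) = (f x + 1) + (sum f F + int (card F))" by simp
  moreover have "even (f x + 1)" using insert by auto
  ultimately show ?case using insert by simp
qed

lemma card_occ: "card {t. t < length w \<and> w ! t = a} = count_list w a"
  by (simp add: count_list_eq_length_filter length_filter_conv_card eq_commute)

lemma cc_odd: "odd (count_list w a) \<Longrightarrow> cc w s a \<noteq> 0"
proof
  assume o: "odd (count_list w a)" and z: "cc w s a = 0"
  have "even (cc w s a + int (card {t. t < length w \<and> w ! t = a}))"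
    unfolding cc_def by (rule sum_pm1_parity) (auto simp: sg_def)
  then show False using o z by (simp add: card_occ)
qed

definition s0 :: "nat list \<Rightarrow> bool list" where
  "s0 w = map (\<lambda>t. even (count_list (take t w) (w ! t))) [0..<length w]"

lemma s0_partial:
  assumes "j \<le> length w"
  shows "(\<Sum>t \<in> {t. t < j \<and> w ! t = a}. sg (s0 w ! t)) = (if odd (count_list (take j w) a) then 1 else 0)"
  using assms
proof (induction j)
  case 0 then show ?case by simp
next
  case (Suc j)
  then have j: "j < length w" by simp
  have tk: "take (Suc j) w = take j w @ [w ! j]" using j by (simp add: take_Suc_conv_app_nth)
  show ?case
  proof (cases "w ! j = a")
    case True
    have "{t. t < Suc j \<and> w ! t = a} = insert j {t. t < j \<and> w ! t = a}" using True by auto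
    then have "(\<Sum>t \<in> {t. t < Suc j \<and> w ! t = a}. sg (s0 w ! t))
        = sg (s0 w ! j) + (\<Sum>t \<in> {t. t < j \<and> w ! t = a}. sg (s0 w ! t))" by simp
    also have "\<dots> = sg (even (count_list (take j w) a)) + (if odd (count_list (take j w) a) then 1 else 0)"
      using Suc j True by (simp add: s0_def)
    finally show ?thesis using tk True by (simp add: sg_def)
  next
    case False
    have "{t. t < Suc j \<and> w ! t = a} = {t. t < j \<and> w ! t = a}" using False less_Suc_eq by auto
    then show ?thesis using Suc j False tk by simp
  qed
qed

lemma s0_len: "length (s0 w) = length w" by (simp add: s0_def)

lemma cc_s0: "even_word w \<Longrightarrow> cc w (s0 w) a = 0"
proof -
  assume e: "even_word w"
  have "cc w (s0 w) a = (if odd (count_list w a) then 1 else 0)"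
    unfolding cc_def using s0_partial[of "length w" w a] by simp
  moreover have "even (count_list w a)"
    using e unfolding even_word_def by (cases "a \<in> set w") auto
  ultimately show ?thesis by simp
qed


lemma floor_lim: "(\<lambda>n. real_of_int \<lfloor>real (Suc n) * x\<rfloor> / real (Suc n)) \<longlonglongrightarrow> x"
proof (rule tendsto_sandwich[of "\<lambda>n. x - inverse (real (Suc n))" _ _ "\<lambda>n. x"])
  show "\<forall>\<^sub>F n in sequentially. x - inverse (real (Suc n)) \<le> real_of_int \<lfloor>real (Suc n) * x\<rfloor> / real (Suc n)"
  proof (intro always_eventually allI)
    fix n
    have "real (Suc n) * x - 1 \<le> real_of_int \<lfloor>real (Suc n) * x\<rfloor>" by linarith
    then have "(real (Suc n) * x - 1) / real (Suc n) \<le> real_of_int \<lfloor>real (Suc n) * x\<rfloor> / real (Suc n)"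
      by (intro divide_right_mono) auto
    moreover have "(real (Suc n) * x - 1) / real (Suc n) = x - inverse (real (Suc n))"
      by (simp add: field_simps del: of_nat_Suc)
    ultimately show "x - inverse (real (Suc n)) \<le> real_of_int \<lfloor>real (Suc n) * x\<rfloor> / real (Suc n)"
      by simp
  qed
  show "\<forall>\<^sub>F n in sequentially. real_of_int \<lfloor>real (Suc n) * x\<rfloor> / real (Suc n) \<le> x"
  proof (intro always_eventually allI)
    fix n
    have "real_of_int \<lfloor>real (Suc n) * x\<rfloor> \<le> real (Suc n) * x" by linarith
    then show "real_of_int \<lfloor>real (Suc n) * x\<rfloor> / real (Suc n) \<le> x" by (simp add: field_simps)
  qed
  show "(\<lambda>n. x - inverse (real (Suc n))) \<longlonglongrightarrow> x"
    using tendsto_diff[OF tendsto_const LIMSEQ_inverse_real_of_nat, of x] by simp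
qed simp

lemma fl_lim: "i \<in> I \<Longrightarrow> (\<lambda>n. real_of_int (fl I (Suc n) u i) / real (Suc n)) \<longlonglongrightarrow> u i"
  using floor_lim[of "u i"] by (simp add: fl_def)

lemma ev_pos: "(\<lambda>n. real_of_int (a n) / real (Suc n)) \<longlonglongrightarrow> \<alpha> \<Longrightarrow> \<alpha> > 0 \<Longrightarrow> eventually (\<lambda>n. a n > 0) sequentially"
proof -
  assume l: "(\<lambda>n. real_of_int (a n) / real (Suc n)) \<longlonglongrightarrow> \<alpha>" and p: "\<alpha> > 0"
  have "eventually (\<lambda>n. real_of_int (a n) / real (Suc n) > 0) sequentially"
    using order_tendstoD(1)[OF l p] .
  then show ?thesis by eventually_elim (simp add: zero_less_divide_iff)
qed

lemma ev_neg: "(\<lambda>n. real_of_int (a n) / real (Suc n)) \<longlonglongrightarrow> \<alpha> \<Longrightarrow> \<alpha> < 0 \<Longrightarrow> eventually (\<lambda>n. a n < 0) sequentially"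
proof -
  assume l: "(\<lambda>n. real_of_int (a n) / real (Suc n)) \<longlonglongrightarrow> \<alpha>" and p: "\<alpha> < 0"
  have "eventually (\<lambda>n. real_of_int (a n) / real (Suc n) < 0) sequentially"
    using order_tendstoD(2)[OF l p] .
  then show ?thesis by eventually_elim (simp add: divide_less_0_iff)
qed

lemma ev_le_iff: "(\<lambda>n. real_of_int (a n) / real (Suc n)) \<longlonglongrightarrow> \<alpha> \<Longrightarrow> \<alpha> \<noteq> 0 \<Longrightarrow>
   eventually (\<lambda>n. a n \<le> 0 \<longleftrightarrow> \<alpha> < 0) sequentially"
proof -
  assume l: "(\<lambda>n. real_of_int (a n) / real (Suc n)) \<longlonglongrightarrow> \<alpha>" and p: "\<alpha> \<noteq> 0"
  show ?thesis
  proof (cases "\<alpha> > 0")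
    case True then show ?thesis using ev_pos[OF l] by (auto elim: eventually_mono)
  next
    case False then have "\<alpha> < 0" using p by simp
    then show ?thesis using ev_neg[OF l] by (auto elim: eventually_mono)
  qed
qed


definition Xr :: "nat list \<Rightarrow> (nat option \<Rightarrow> real) \<Rightarrow> bool list \<Rightarrow> nat \<Rightarrow> real" where
  "Xr w u s j = u None + (\<Sum>t<j. real_of_int (sg (s ! t)) * u (Some (w ! t)))"

definition Sr :: "nat list \<Rightarrow> (nat option \<Rightarrow> real) \<Rightarrow> bool list \<Rightarrow> real" where
  "Sr w u s = (\<Sum>t<length w. real_of_int (sg (s ! t)) * u (Some (w ! t)))"

definition Lm :: "nat list \<Rightarrow> real \<Rightarrow> (nat option \<Rightarrow> real) \<Rightarrow> bool list \<Rightarrow> bool" where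
  "Lm w y u s \<longleftrightarrow> length s = length w \<and> Sr w u s = 0 \<and>
     (\<forall>j \<le> length w. 0 < Xr w u s j \<and> Xr w u s j < (if even j then y else 1))"

definition Gf :: "nat list \<Rightarrow> real \<Rightarrow> (nat option \<Rightarrow> real) \<Rightarrow> real" where
  "Gf w y u = (if \<forall>a\<in>set w. 0 < u (Some a) then real (card {s. Lm w y u s}) else 0)"

definition SL :: "nat list \<Rightarrow> bool list set" where
  "SL w = {s. length s = length w}"

lemma finite_SL: "finite (SL w)"
  unfolding SL_def using finite_lists_length_eq[of "UNIV :: bool set" "length w"] by simp

definition Gen :: "nat list \<Rightarrow> real \<Rightarrow> (nat option \<Rightarrow> real) \<Rightarrow> bool" where
  "Gen w y u \<longleftrightarrow> (\<forall>a\<in>set w. u (Some a) \<noteq> 0) \<and>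
     (\<forall>a\<in>set w. \<forall>a'\<in>set w. a \<noteq> a' \<longrightarrow> u (Some a) - u (Some a') \<noteq> 0) \<and>
     (\<forall>s \<in> SL w. (\<exists>a\<in>set w. cc w s a \<noteq> 0) \<longrightarrow> Sr w u s \<noteq> 0) \<and>
     (\<forall>s \<in> SL w. \<forall>j \<in> {..length w}. Xr w u s j \<noteq> 0 \<and> Xr w u s j \<noteq> (if even j then y else 1))"

lemma lf_split:
  "(\<Sum>i\<in>Idx w. c i * u i) = c None * u None + (\<Sum>a\<in>set w. c (Some a) * u (Some a))"
proof -
  have "(\<Sum>i\<in>Idx w. c i * u i) = c None * u None + (\<Sum>i\<in>Some ` set w. c i * u i)"
    unfolding Idx_def by (subst sum.insert) auto
  also have "(\<Sum>i\<in>Some ` set w. c i * u i) = (\<Sum>a\<in>set w. c (Some a) * u (Some a))"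
    by (subst sum.reindex) auto
  finally show ?thesis .
qed

lemma hn:
  fixes c :: "nat option \<Rightarrow> real"
  assumes "c None \<noteq> 0 \<or> (\<exists>a\<in>set w. c (Some a) \<noteq> 0)"
  shows "AE u in PiM (Idx w) (\<lambda>_. LB). c None * u None + (\<Sum>a\<in>set w. c (Some a) * u (Some a)) \<noteq> t"
proof -
  obtain j where "j \<in> Idx w" "c j \<noteq> 0" using assms by (auto simp: Idx_def)
  from hyper_null[OF finite_Idx[of w], of j c t] this show ?thesis by (simp add: lf_split)
qed

lemma Xr_lin:
  assumes "j \<le> length w"
  shows "Xr w u s j = 1 * u None + (\<Sum>a\<in>set w. real_of_int (\<Sum>t \<in> {t. t < j \<and> w ! t = a}. sg (s ! t)) * u (Some a))"
  unfolding Xr_def using regroup[OF assms, of "\<lambda>t. real_of_int (sg (s ! t))" "\<lambda>a. u (Some a)"] by simp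

lemma Sr_lin:
  "Sr w u s = 0 * u None + (\<Sum>a\<in>set w. real_of_int (cc w s a) * u (Some a))"
  unfolding Sr_def cc_def using regroup[of "length w" w "\<lambda>t. real_of_int (sg (s ! t))" "\<lambda>a. u (Some a)"] by simp

lemma AE_Gen: "AE u in PiM (Idx w) (\<lambda>_. LB). Gen w y u"
proof -
  let ?M = "PiM (Idx w) (\<lambda>_. LB)"
  have 1: "AE u in ?M. \<forall>a\<in>set w. u (Some a) \<noteq> 0"
  proof (subst AE_finite_all, simp, intro ballI)
    fix a assume a: "a \<in> set w"
    have "AE u in ?M. (\<lambda>i. if i = Some a then 1 else 0) None * u None
       + (\<Sum>a'\<in>set w. (\<lambda>i. if i = Some a then 1 else 0) (Some a') * u (Some a')) \<noteq> (0::real)"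
      by (rule hn) (use a in auto)
    moreover have "(\<lambda>i. if i = Some a then 1 else 0) None * u None
       + (\<Sum>a'\<in>set w. (\<lambda>i. if i = Some a then 1 else 0) (Some a') * u (Some a')) = u (Some a)" for u :: "nat option \<Rightarrow> real"
    proof -
      have "(\<Sum>a'\<in>set w. (\<lambda>i. if i = Some a then 1 else 0) (Some a') * u (Some a')) = (\<Sum>a'\<in>set w. if a' = a then u (Some a) else 0)"
        by (intro sum.cong) auto
      also have "\<dots> = u (Some a)" using a by simp
      finally show ?thesis by simp
    qed
    ultimately show "AE u in ?M. u (Some a) \<noteq> 0" by simp
  qed
  have 2: "AE u in ?M. \<forall>a\<in>set w. \<forall>a'\<in>set w. a \<noteq> a' \<longrightarrow> u (Some a) - u (Some a') \<noteq> 0"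
  proof (subst AE_finite_all, simp, intro ballI, subst AE_finite_all, simp, intro ballI)
    fix a a' assume a: "a \<in> set w" "a' \<in> set w"
    show "AE u in ?M. a \<noteq> a' \<longrightarrow> u (Some a) - u (Some a') \<noteq> 0"
    proof (cases "a = a'")
      case False
      define c where "c = (\<lambda>i. if i = Some a then 1 else if i = Some a' then -1 else (0::real))"
      have "AE u in ?M. c None * u None + (\<Sum>b\<in>set w. c (Some b) * u (Some b)) \<noteq> 0"
        by (rule hn) (use a in \<open>auto simp: c_def\<close>)
      moreover have "c None * u None + (\<Sum>b\<in>set w. c (Some b) * u (Some b)) = u (Some a) - u (Some a')" for u
      proof -
        have "(\<Sum>b\<in>set w. c (Some b) * u (Some b)) = (\<Sum>b\<in>set w. (if b = a then u (Some a) else 0) - (if b = a' then u (Some a') else 0))"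
          using False by (intro sum.cong) (auto simp: c_def)
        also have "\<dots> = u (Some a) - u (Some a')" using a by (simp add: sum_subtractf)
        finally show ?thesis by (simp add: c_def)
      qed
      ultimately show ?thesis by simp
    qed simp
  qed
  have 3: "AE u in ?M. \<forall>s \<in> SL w. (\<exists>a\<in>set w. cc w s a \<noteq> 0) \<longrightarrow> Sr w u s \<noteq> 0"
  proof (subst AE_finite_all, rule finite_SL, intro ballI)
    fix s assume s: "s \<in> SL w"
    show "AE u in ?M. (\<exists>a\<in>set w. cc w s a \<noteq> 0) \<longrightarrow> Sr w u s \<noteq> 0"
    proof (cases "\<exists>a\<in>set w. cc w s a \<noteq> 0")
      case True
      have "AE u in ?M. (\<lambda>i. case i of None \<Rightarrow> 0 | Some a \<Rightarrow> real_of_int (cc w s a)) None * u None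
         + (\<Sum>a\<in>set w. (\<lambda>i. case i of None \<Rightarrow> 0 | Some a \<Rightarrow> real_of_int (cc w s a)) (Some a) * u (Some a)) \<noteq> 0"
        by (rule hn) (use True in auto)
      then show ?thesis by (simp add: Sr_lin)
    qed simp
  qed
  have 4: "AE u in ?M. \<forall>s \<in> SL w. \<forall>j \<in> {..length w}. Xr w u s j \<noteq> 0 \<and> Xr w u s j \<noteq> (if even j then y else 1)"
  proof (subst AE_finite_all, rule finite_SL, intro ballI, subst AE_finite_all, simp, intro ballI)
    fix s j assume j: "j \<in> {..length w}"
    let ?c = "\<lambda>i. case i of None \<Rightarrow> 1 | Some a \<Rightarrow> real_of_int (\<Sum>t \<in> {t. t < j \<and> w ! t = a}. sg (s ! t))"
    have "AE u in ?M. ?c None * u None + (\<Sum>a\<in>set w. ?c (Some a) * u (Some a)) \<noteq> 0"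
      by (rule hn) simp
    moreover have "AE u in ?M. ?c None * u None + (\<Sum>a\<in>set w. ?c (Some a) * u (Some a)) \<noteq> (if even j then y else 1)"
      by (rule hn) simp
    ultimately show "AE u in ?M. Xr w u s j \<noteq> 0 \<and> Xr w u s j \<noteq> (if even j then y else 1)"
      using Xr_lin[of j w] j by simp
  qed
  show ?thesis using 1 2 3 4 unfolding Gen_def by auto
qed


lemma ev_ne: "(\<lambda>n. real_of_int (a n) / real (Suc n)) \<longlonglongrightarrow> \<alpha> \<Longrightarrow> \<alpha> \<noteq> 0 \<Longrightarrow> eventually (\<lambda>n. a n \<noteq> 0) sequentially"
proof -
  assume l: "(\<lambda>n. real_of_int (a n) / real (Suc n)) \<longlonglongrightarrow> \<alpha>" and p: "\<alpha> \<noteq> 0"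
  show ?thesis
  proof (cases "\<alpha> > 0")
    case True then show ?thesis using ev_pos[OF l] by (auto elim: eventually_mono)
  next
    case False then have "\<alpha> < 0" using p by simp
    then show ?thesis using ev_neg[OF l] by (auto elim: eventually_mono)
  qed
qed

context
  fixes w :: "nat list" and u :: "nat option \<Rightarrow> real" and z :: "nat \<Rightarrow> nat option \<Rightarrow> int"
  assumes zdef: "z = (\<lambda>n. fl (Idx w) (Suc n) u)"
begin

lemma z_lim: "i \<in> Idx w \<Longrightarrow> (\<lambda>n. real_of_int (z n i) / real (Suc n)) \<longlonglongrightarrow> u i"
  unfolding zdef by (rule fl_lim)

lemma zS_lim: "a \<in> set w \<Longrightarrow> (\<lambda>n. real_of_int (z n (Some a)) / real (Suc n)) \<longlonglongrightarrow> u (Some a)"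
  by (rule z_lim) (simp add: Idx_def)

lemma X_lim:
  assumes "j \<le> length w"
  shows "(\<lambda>n. real_of_int (X w (z n) s j) / real (Suc n)) \<longlonglongrightarrow> Xr w u s j"
proof -
  have e: "real_of_int (X w (z n) s j) / real (Suc n) = real_of_int (z n None) / real (Suc n)
     + (\<Sum>t<j. real_of_int (sg (s ! t)) * (real_of_int (z n (Some (w ! t))) / real (Suc n)))" for n
    by (simp add: X_def add_divide_distrib sum_divide_distrib)
  show ?thesis unfolding e Xr_def
    using assms by (intro tendsto_add tendsto_sum tendsto_mult_left z_lim zS_lim) (auto simp: Idx_def)
qed

lemma S_lim:
  "(\<lambda>n. real_of_int (\<Sum>t<length w. sg (s ! t) * z n (Some (w ! t))) / real (Suc n)) \<longlonglongrightarrow> Sr w u s"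
proof -
  have e: "real_of_int (\<Sum>t<length w. sg (s ! t) * z n (Some (w ! t))) / real (Suc n)
     = (\<Sum>t<length w. real_of_int (sg (s ! t)) * (real_of_int (z n (Some (w ! t))) / real (Suc n)))" for n
    by (simp add: sum_divide_distrib)
  show ?thesis unfolding e Sr_def by (intro tendsto_sum tendsto_mult_left zS_lim) auto
qed

lemma ev_Cnd:
  fixes p :: "nat \<Rightarrow> nat"
  assumes py: "(\<lambda>n. real (p (Suc n)) / real (Suc n)) \<longlonglongrightarrow> y"
    and G: "Gen w y u" and s: "s \<in> SL w"
  shows "eventually (\<lambda>n. Cnd w (p (Suc n)) (Suc n) (z n) s \<longleftrightarrow> Lm w y u s) sequentially"
proof -
  have clos: "eventually (\<lambda>n. (\<Sum>t<length w. sg (s ! t) * z n (Some (w ! t))) = 0 \<longleftrightarrow> Sr w u s = 0) sequentially"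
  proof (cases "\<exists>a\<in>set w. cc w s a \<noteq> 0")
    case True
    then have "Sr w u s \<noteq> 0" using G s unfolding Gen_def by blast
    then show ?thesis using ev_ne[OF S_lim] by (auto elim: eventually_mono)
  next
    case False
    have "(\<Sum>t<length w. sg (s ! t) * z n (Some (w ! t))) = 0" for n
    proof -
      have "(\<Sum>t<length w. sg (s ! t) * z n (Some (w ! t))) = (\<Sum>a\<in>set w. cc w s a * z n (Some a))"
        unfolding cc_def by (rule regroup) simp
      then show ?thesis using False by simp
    qed
    moreover have "Sr w u s = 0" using False by (simp add: Sr_lin)
    ultimately show ?thesis by simp
  qed
  have rng: "eventually (\<lambda>n. \<forall>j\<in>{..length w}. (1 \<le> X w (z n) s j \<and> X w (z n) s j \<le> int (if even j then p (Suc n) else Suc n))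
       \<longleftrightarrow> (0 < Xr w u s j \<and> Xr w u s j < (if even j then y else 1))) sequentially"
  proof (rule eventually_ball_finite, simp, intro ballI)
    fix j assume j: "j \<in> {..length w}"
    have nz: "Xr w u s j \<noteq> 0" "Xr w u s j \<noteq> (if even j then y else 1)" using G s j unfolding Gen_def by auto
    have l1: "eventually (\<lambda>n. 1 \<le> X w (z n) s j \<longleftrightarrow> 0 < Xr w u s j) sequentially"
    proof (cases "Xr w u s j > 0")
      case True
      have "eventually (\<lambda>n. 0 < X w (z n) s j) sequentially" using ev_pos[OF X_lim True] j by simp
      then show ?thesis using True by (auto elim!: eventually_mono)
    next
      case False then have "Xr w u s j < 0" using nz by simp
      moreover have "eventually (\<lambda>n. X w (z n) s j < 0) sequentially" using ev_neg[OF X_lim calculation] j by simp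
      ultimately show ?thesis by (auto elim!: eventually_mono)
    qed
    define T where "T n = int (if even j then p (Suc n) else Suc n)" for n
    have Tl: "(\<lambda>n. real_of_int (T n) / real (Suc n)) \<longlonglongrightarrow> (if even j then y else 1)"
      using py by (cases "even j") (auto simp: T_def simp del: of_nat_Suc)
    have "(\<lambda>n. real_of_int (X w (z n) s j - T n) / real (Suc n)) \<longlonglongrightarrow> Xr w u s j - (if even j then y else 1)"
      using tendsto_diff[OF X_lim Tl] j by (simp add: diff_divide_distrib)
    from ev_le_iff[OF this] nz
    have l2: "eventually (\<lambda>n. X w (z n) s j \<le> T n \<longleftrightarrow> Xr w u s j < (if even j then y else 1)) sequentially"
      by (auto elim!: eventually_mono)
    show "eventually (\<lambda>n. (1 \<le> X w (z n) s j \<and> X w (z n) s j \<le> int (if even j then p (Suc n) else Suc n))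
       \<longleftrightarrow> (0 < Xr w u s j \<and> Xr w u s j < (if even j then y else 1))) sequentially"
      using l1 l2 unfolding T_def by eventually_elim auto
  qed
  show ?thesis using clos rng
  proof eventually_elim
    case (elim n)
    then show ?case using s unfolding Cnd_def Lm_def SL_def by auto
  qed
qed

end


lemma pointwise:
  fixes p :: "nat \<Rightarrow> nat"
  assumes lw: "length w = 2 * k" and py: "(\<lambda>n. real (p (Suc n)) / real (Suc n)) \<longlonglongrightarrow> y"
    and G: "Gen w y u"
  shows "(\<lambda>n. real (card (Fib w (p (Suc n)) (Suc n) (fl (Idx w) (Suc n) u)))) \<longlonglongrightarrow> Gf w y u"
proof -
  define z where "z = (\<lambda>n. fl (Idx w) (Suc n) u)"
  note zS = zS_lim[OF z_def]
  have "(\<lambda>n. real (card (Fib w (p (Suc n)) (Suc n) (z n)))) \<longlonglongrightarrow> Gf w y u"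
  proof (cases "\<forall>a\<in>set w. 0 < u (Some a)")
    case True
    have E1: "eventually (\<lambda>n. \<forall>a\<in>set w. 1 \<le> z n (Some a)) sequentially"
    proof (rule eventually_ball_finite, simp, intro ballI)
      fix a assume a: "a \<in> set w"
      show "eventually (\<lambda>n. 1 \<le> z n (Some a)) sequentially"
        using ev_pos[OF zS[OF a]] True a by (auto elim!: eventually_mono)
    qed
    have E2: "eventually (\<lambda>n. \<forall>a\<in>set w. \<forall>a'\<in>set w. a \<noteq> a' \<longrightarrow> z n (Some a) - z n (Some a') \<noteq> 0) sequentially"
    proof (rule eventually_ball_finite, simp, intro ballI, rule eventually_ball_finite, simp, intro ballI)
      fix a a' assume a: "a \<in> set w" "a' \<in> set w"
      show "eventually (\<lambda>n. a \<noteq> a' \<longrightarrow> z n (Some a) - z n (Some a') \<noteq> 0) sequentially"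
      proof (cases "a = a'")
        case False
        have l: "(\<lambda>n. real_of_int (z n (Some a) - z n (Some a')) / real (Suc n)) \<longlonglongrightarrow> u (Some a) - u (Some a')"
          using tendsto_diff[OF zS[OF a(1)] zS[OF a(2)]] by (simp add: diff_divide_distrib)
        have nz: "u (Some a) - u (Some a') \<noteq> 0" using G a False unfolding Gen_def by blast
        from ev_ne[OF l nz] show ?thesis by (auto elim!: eventually_mono)
      qed simp
    qed
    have E3: "eventually (\<lambda>n. \<forall>s\<in>SL w. Cnd w (p (Suc n)) (Suc n) (z n) s \<longleftrightarrow> Lm w y u s) sequentially"
      by (rule eventually_ball_finite[OF finite_SL]) (use ev_Cnd[OF z_def py G] in blast)
    have "eventually (\<lambda>n. real (card (Fib w (p (Suc n)) (Suc n) (z n))) = Gf w y u) sequentially"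
      using E1 E2 E3
    proof eventually_elim
      case (elim n)
      have ze: "z n \<in> extensional (Idx w)" by (simp add: z_def fl_def)
      have inj: "inj_on (\<lambda>a. z n (Some a)) (set w)" using elim(2) by (auto simp: inj_on_def)
      have "card (Fib w (p (Suc n)) (Suc n) (z n)) = card {s. Cnd w (p (Suc n)) (Suc n) (z n) s}"
        by (rule card_Fib_eq[OF lw ze elim(1) inj])
      also have "{s. Cnd w (p (Suc n)) (Suc n) (z n) s} = {s. Lm w y u s}"
      proof -
        have "Cnd w (p (Suc n)) (Suc n) (z n) s = Lm w y u s" for s
        proof (cases "s \<in> SL w")
          case True then show ?thesis using elim(3) by blast
        next
          case False then show ?thesis by (simp add: SL_def Cnd_def Lm_def)
        qed
        then show ?thesis by simp
      qed
      finally show ?case using True by (simp add: Gf_def)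
    qed
    then show "(\<lambda>n. real (card (Fib w (p (Suc n)) (Suc n) (z n)))) \<longlonglongrightarrow> Gf w y u"
      by (rule tendsto_eventually)
  next
    case False
    have Gf0: "Gf w y u = 0" unfolding Gf_def by (rule if_not_P[OF False])
    from False obtain a where a: "a \<in> set w" "u (Some a) \<le> 0" by auto
    then have "u (Some a) < 0" using G unfolding Gen_def by force
    from ev_neg[OF zS[OF a(1)] this]
    have "eventually (\<lambda>n. real (card (Fib w (p (Suc n)) (Suc n) (z n))) = Gf w y u) sequentially"
    proof (rule eventually_mono)
      fix n assume neg: "z n (Some a) < 0"
      have "Fib w (p (Suc n)) (Suc n) (z n) = {}"
      proof (rule ccontr)
        assume "Fib w (p (Suc n)) (Suc n) (z n) \<noteq> {}"
        then obtain pc where "pc \<in> Fib w (p (Suc n)) (Suc n) (z n)" by auto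
        then have "z n \<in> Phi w ` Pi_S L_T (p (Suc n)) (Suc n) w" unfolding Fib_def by (auto intro: image_eqI[OF sym])
        from Zbound[OF lw this] a(1) neg show False by (auto simp: Idx_def)
      qed
      then show "real (card (Fib w (p (Suc n)) (Suc n) (z n))) = Gf w y u" using Gf0 by simp
    qed
    then show "(\<lambda>n. real (card (Fib w (p (Suc n)) (Suc n) (z n)))) \<longlonglongrightarrow> Gf w y u"
      by (rule tendsto_eventually)
  qed
  then show ?thesis by (simp add: z_def)
qed

lemma Gf_sum: "Gf w y u = (\<Sum>s\<in>SL w. if (\<forall>a\<in>set w. 0 < u (Some a)) \<and> Sr w u s = 0 \<and>
     (\<forall>j \<in> {..length w}. 0 < Xr w u s j \<and> Xr w u s j < (if even j then y else 1)) then 1 else 0)"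
proof (cases "\<forall>a\<in>set w. 0 < u (Some a)")
  case True
  have "{s. Lm w y u s} = {s \<in> SL w. Sr w u s = 0 \<and>
     (\<forall>j \<in> {..length w}. 0 < Xr w u s j \<and> Xr w u s j < (if even j then y else 1))}"
    by (auto simp: Lm_def SL_def)
  then show ?thesis using True finite_SL[of w] by (simp add: Gf_def sum.If_cases Int_def)
next
  case False
  have "Gf w y u = 0" unfolding Gf_def by (rule if_not_P[OF False])
  moreover have "(\<Sum>s\<in>SL w. if (\<forall>a\<in>set w. 0 < u (Some a)) \<and> Sr w u s = 0 \<and>
     (\<forall>j \<in> {..length w}. 0 < Xr w u s j \<and> Xr w u s j < (if even j then y else 1)) then 1 else (0::real)) = 0"
    using False by (intro sum.neutral ballI if_not_P) blast
  ultimately show ?thesis by simp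
qed


lemma comp_meas: "(\<lambda>u. u i) \<in> borel_measurable (PiM I (\<lambda>_. LB))"
proof (cases "i \<in> I")
  case True then show ?thesis using measurable_component_singleton[of i I "\<lambda>_. LB"] by simp
next
  case False
  have "(\<lambda>u::'a \<Rightarrow> real. undefined::real) \<in> borel_measurable (PiM I (\<lambda>_. LB))" by simp
  then show ?thesis
    by (rule measurable_cong[THEN iffD1, rotated]) (use False in \<open>auto simp: space_PiM PiE_def extensional_def\<close>)
qed

lemma Gf_meas: "Gf w y \<in> borel_measurable (PiM (Idx w) (\<lambda>_. LB))"
proof -
  have Srm[measurable]: "(\<lambda>u. Sr w u s) \<in> borel_measurable (PiM (Idx w) (\<lambda>_. LB))" for s
    unfolding Sr_def by (intro borel_measurable_sum borel_measurable_times borel_measurable_const comp_meas)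
  have Xrm[measurable]: "(\<lambda>u. Xr w u s j) \<in> borel_measurable (PiM (Idx w) (\<lambda>_. LB))" for s j
    unfolding Xr_def
    by (intro borel_measurable_add comp_meas borel_measurable_sum borel_measurable_times borel_measurable_const)
  have cm[measurable]: "(\<lambda>u. u (Some a)) \<in> borel_measurable (PiM (Idx w) (\<lambda>_. LB))" for a
    by (rule comp_meas)
  show ?thesis
    unfolding Gf_sum[abs_def] by measurable
qed


lemma neg_le:
  shows "num_even_generating w \<le> Suc (card (set w))"
proof -
  define Fs where "Fs = {i. 1 \<le> i \<and> i \<le> length w \<and> w ! (i - 1) \<notin> set (take (i - 1) w)}"
  have sub: "{i \<in> {0..length w}. even i \<and> generating w i} \<subseteq> insert 0 Fs"
    by (auto simp: generating_def Fs_def)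
  have inj: "inj_on (\<lambda>i. w ! (i - 1)) Fs"
  proof (rule inj_onI)
    fix i j assume i: "i \<in> Fs" and j: "j \<in> Fs" and e: "w ! (i - 1) = w ! (j - 1)"
    show "i = j"
    proof (rule ccontr)
      assume "i \<noteq> j"
      then consider "i < j" | "j < i" by linarith
      then show False
      proof cases
        case 1
        then have "w ! (i - 1) \<in> set (take (j - 1) w)" using i j
          by (auto simp: Fs_def in_set_conv_nth intro!: exI[of _ "i - 1"])
        then show False using j e by (simp add: Fs_def)
      next
        case 2
        then have "w ! (j - 1) \<in> set (take (i - 1) w)" using i j
          by (auto simp: Fs_def in_set_conv_nth intro!: exI[of _ "j - 1"])
        then show False using i e by (simp add: Fs_def)
      qed
    qed
  qed
  have img: "(\<lambda>i. w ! (i - 1)) ` Fs \<subseteq> set w" by (auto simp: Fs_def)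
  have fF: "finite Fs" unfolding Fs_def by (rule finite_subset[of _ "{..length w}"]) auto
  have "card Fs \<le> card (set w)" using card_inj_on_le[OF inj img] by simp
  have "num_even_generating w \<le> card (insert 0 Fs)"
    unfolding num_even_generating_def by (rule card_mono) (use sub fF in auto)
  also have "\<dots> \<le> Suc (card Fs)" by (simp add: card_insert_if fF)
  finally show ?thesis using \<open>card Fs \<le> card (set w)\<close> by simp
qed


lemma Gf_nonneg: "0 \<le> Gf w y u" by (simp add: Gf_def)

lemma Gf_pos:
  assumes ev: "even_word w" and y: "0 < y" and int: "integrable (PiM (Idx w) (\<lambda>_. LB)) (Gf w y)"
  shows "0 < integral\<^sup>L (PiM (Idx w) (\<lambda>_. LB)) (Gf w y)"
proof -
  let ?M = "PiM (Idx w) (\<lambda>_. LB)"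
  define \<delta> where "\<delta> = min y 1 / 3"
  define \<epsilon> where "\<epsilon> = \<delta> / real (Suc (card (set w)))"
  have dpos: "0 < \<delta>" using y by (simp add: \<delta>_def)
  have epos: "0 < \<epsilon>" using dpos by (simp add: \<epsilon>_def)
  define A where "A i = (if i = None then {\<delta><..<2*\<delta>} else {0<..<\<epsilon>})" for i :: "nat option"
  define len where "len i = (if i = None then \<delta> else \<epsilon>)" for i :: "nat option"
  define V where "V = PiE (Idx w) A"
  have lenpos: "0 < len i" for i using dpos epos by (simp add: len_def)
  have Vs: "V \<in> sets ?M" unfolding V_def by (intro sets_PiM_I_finite) (auto simp: finite_Idx A_def)
  interpret product_sigma_finite "\<lambda>_::nat option. LB" by (rule psf_lborel)
  have "emeasure ?M V = (\<Prod>i\<in>Idx w. emeasure LB (A i))"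
    unfolding V_def by (rule emeasure_PiM) (auto simp: finite_Idx A_def)
  also have "\<dots> = (\<Prod>i\<in>Idx w. ennreal (len i))"
    using dpos epos by (intro prod.cong refl) (auto simp: A_def len_def)
  also have "\<dots> = ennreal (\<Prod>i\<in>Idx w. len i)"
    using lenpos by (simp add: prod_ennreal less_imp_le)
  finally have eV: "emeasure ?M V = ennreal (\<Prod>i\<in>Idx w. len i)" .
  have mV: "measure ?M V = (\<Prod>i\<in>Idx w. len i)"
    using eV lenpos by (simp add: measure_def prod_nonneg less_imp_le)
  have mVpos: "0 < measure ?M V" unfolding mV using lenpos by (simp add: prod_pos)
  have intV: "integrable ?M (indicator V :: _ \<Rightarrow> real)"
    using Vs eV by (intro integrable_real_indicator) auto
  have ge: "indicator V u \<le> Gf w y u" for u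
  proof (cases "u \<in> V")
    case False then show ?thesis by (simp add: Gf_nonneg)
  next
    case True
    have uN: "\<delta> < u None" "u None < 2 * \<delta>" using True by (auto simp: V_def A_def Idx_def PiE_iff)
    have uS: "0 < u (Some a) \<and> u (Some a) < \<epsilon>" if "a \<in> set w" for a
      using True that by (auto simp: V_def A_def Idx_def PiE_iff)
    have Xb: "0 < Xr w u (s0 w) j \<and> Xr w u (s0 w) j < (if even j then y else 1)" if j: "j \<le> length w" for j
    proof -
      have "Xr w u (s0 w) j = 1 * u None + (\<Sum>a\<in>set w. real_of_int (if odd (count_list (take j w) a) then 1 else 0) * u (Some a))"
        using Xr_lin[OF j, of u "s0 w"] s0_partial[OF j] by simp
      moreover have "0 \<le> (\<Sum>a\<in>set w. real_of_int (if odd (count_list (take j w) a) then 1 else 0) * u (Some a))"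
        using uS by (intro sum_nonneg) (auto simp: less_imp_le)
      moreover have "(\<Sum>a\<in>set w. real_of_int (if odd (count_list (take j w) a) then 1 else 0) * u (Some a)) \<le> real (card (set w)) * \<epsilon>"
        using uS epos by (intro sum_bounded_above) (auto simp: less_imp_le)
      moreover have "real (card (set w)) * \<epsilon> < \<delta>"
        using dpos by (simp add: \<epsilon>_def field_simps)
      moreover have "3 * \<delta> \<le> y" "3 * \<delta> \<le> 1" by (auto simp: \<delta>_def)
      ultimately show ?thesis using uN dpos by auto
    qed
    have Sr0: "Sr w u (s0 w) = 0" using cc_s0[OF ev] by (simp add: Sr_lin)
    have Lm0: "Lm w y u (s0 w)" using Xb Sr0 by (simp add: Lm_def s0_len)
    have fin: "finite {s. Lm w y u s}"
      by (rule finite_subset[OF _ finite_SL[of w]]) (auto simp: SL_def Lm_def)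
    have "1 \<le> card {s. Lm w y u s}"
      using Lm0 fin by (metis One_nat_def Suc_leI card_gt_0_iff empty_iff mem_Collect_eq)
    moreover have "\<forall>a\<in>set w. 0 < u (Some a)" using uS by auto
    ultimately show ?thesis using True by (simp add: Gf_def)
  qed
  have "integral\<^sup>L ?M (indicator V :: _ \<Rightarrow> real) \<le> integral\<^sup>L ?M (Gf w y)"
    by (rule integral_mono[OF intV int]) (use ge in auto)
  moreover have "integral\<^sup>L ?M (indicator V :: _ \<Rightarrow> real) = measure ?M V"
    using sets.sets_into_space[OF Vs] by (simp add: Int_absorb2)
  ultimately show ?thesis using mVpos by linarith
qed

lemma Gf_zero:
  assumes ne: "\<not> even_word w"
  shows "integral\<^sup>L (PiM (Idx w) (\<lambda>_. LB)) (Gf w y) = 0"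
proof (rule integral_eq_zero_AE)
  obtain a where a: "a \<in> set w" "odd (count_list w a)" using ne unfolding even_word_def by auto
  show "AE u in PiM (Idx w) (\<lambda>_. LB). Gf w y u = 0"
    using AE_Gen[of w y]
  proof eventually_elim
    case (elim u)
    have "{s. Lm w y u s} = {}"
    proof (rule ccontr)
      assume "{s. Lm w y u s} \<noteq> {}"
      then obtain s where s: "Lm w y u s" by auto
      then have sS: "s \<in> SL w" "Sr w u s = 0" by (auto simp: Lm_def SL_def)
      have "cc w s a \<noteq> 0" by (rule cc_odd[OF a(2)])
      then show False using elim sS a(1) unfolding Gen_def by blast
    qed
    then show ?case by (simp add: Gf_def)
  qed
qed


theorem lemma5p4:
  fixes p :: "nat \<Rightarrow> nat" and y :: real and w :: "nat list" and k b r :: nat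
  assumes "(\<lambda>n. real (p n) / real n) \<longlonglongrightarrow> y" and "0 < y"
    and "is_word w" and "length w = 2 * k"
    and "num_letters w = b" and "num_even_generating w = r + 1"
  shows "\<exists>c. (\<lambda>n. real (card (Pi_S L_T (p n) n w))
                 / (real (p n) ^ (r + 1) * real n ^ (b - r))) \<longlonglongrightarrow> c
          \<and> (even_word w \<longrightarrow> c > 0) \<and> (\<not> even_word w \<longrightarrow> c = 0)"
proof -
  note lw = assms(4)
  let ?M = "PiM (Idx w) (\<lambda>_. LB)"
  have rb: "r \<le> b" using neg_le[of w] assms(5,6) by (simp add: num_letters_def)
  have cI: "card (Idx w) = Suc b" using card_Idx[of w] assms(5) by (simp add: num_letters_def)
  have py: "(\<lambda>n. real (p (Suc n)) / real (Suc n)) \<longlonglongrightarrow> y" using LIMSEQ_Suc[OF assms(1)] .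
  have "Bseq (\<lambda>n. real (p (Suc n)) / real (Suc n))" using py by (intro convergent_imp_Bseq convergentI)
  then obtain C where C: "0 < C" "\<And>n. norm (real (p (Suc n)) / real (Suc n)) \<le> C" by (auto elim: BseqE)
  define C' where "C' = max C 1"
  define Z where "Z n = Phi w ` Pi_S L_T (p (Suc n)) (Suc n) w" for n
  define g where "g n z = real (card (Fib w (p (Suc n)) (Suc n) z))" for n z
  have fZ: "finite (Z n)" for n unfolding Z_def using finite_PiS[OF lw] by simp
  have Zb: "Z n \<subseteq> {z \<in> extensional (Idx w). \<forall>i\<in>Idx w. 0 \<le> z i \<and> real_of_int (z i) \<le> C' * real (Suc n)}" for n
  proof
    fix z assume z: "z \<in> Z n"
    from Zbound[OF lw z[unfolded Z_def]]
    have zb: "z \<in> extensional (Idx w)" "\<And>i. i \<in> Idx w \<Longrightarrow> 0 \<le> z i \<and> z i \<le> int (max (p (Suc n)) (Suc n))" by auto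
    have "real (p (Suc n)) \<le> C * real (Suc n)"
      using C(2)[of n] by (simp add: field_simps del: of_nat_Suc)
    moreover have "C * real (Suc n) \<le> C' * real (Suc n)" unfolding C'_def by (intro mult_right_mono) auto
    moreover have "real (Suc n) \<le> C' * real (Suc n)" unfolding C'_def
      using mult_right_mono[of 1 "max C 1" "real (Suc n)"] by simp
    ultimately have "real (max (p (Suc n)) (Suc n)) \<le> C' * real (Suc n)"
      by (simp only: of_nat_max)
    then show "z \<in> {z \<in> extensional (Idx w). \<forall>i\<in>Idx w. 0 \<le> z i \<and> real_of_int (z i) \<le> C' * real (Suc n)}"
    proof (intro CollectI conjI ballI)
      fix i assume i: "i \<in> Idx w"
      have "real_of_int (z i) \<le> real_of_int (int (max (p (Suc n)) (Suc n)))"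
        using zb(2)[OF i] by (simp only: of_int_le_iff)
      then show "real_of_int (z i) \<le> C' * real (Suc n)"
        using \<open>real (max (p (Suc n)) (Suc n)) \<le> C' * real (Suc n)\<close> by simp
      show "0 \<le> z i" using zb(2)[OF i] by simp
    qed (rule zb(1))
  qed
  have gb: "0 \<le> g n z \<and> g n z \<le> 2 ^ length w" for n z
    using card_Fib_le[OF lw, of "p (Suc n)" "Suc n" z] unfolding g_def
    by (simp del: of_nat_power add: of_nat_power[symmetric])
  have lim: "AE u in ?M. (\<lambda>n. if fl (Idx w) (Suc n) u \<in> Z n then g n (fl (Idx w) (Suc n) u) else 0) \<longlonglongrightarrow> Gf w y u"
    using AE_Gen[of w y]
  proof eventually_elim
    case (elim u)
    have "(if fl (Idx w) (Suc n) u \<in> Z n then g n (fl (Idx w) (Suc n) u) else 0)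
        = real (card (Fib w (p (Suc n)) (Suc n) (fl (Idx w) (Suc n) u)))" for n
    proof (cases "fl (Idx w) (Suc n) u \<in> Z n")
      case False
      then have "Fib w (p (Suc n)) (Suc n) (fl (Idx w) (Suc n) u) = {}"
        unfolding Z_def Fib_def by (auto intro: image_eqI[OF sym])
      then show ?thesis using False by simp
    qed (simp add: g_def)
    then show ?case using pointwise[OF lw py elim] by simp
  qed
  note R = riemann[OF finite_Idx fZ Zb gb Gf_meas lim]
  have sumeq: "(\<Sum>z\<in>Z n. g n z) = real (card (Pi_S L_T (p (Suc n)) (Suc n) w))" for n
    unfolding Z_def g_def card_PiS_sum[OF lw] by simp
  define J where "J = integral\<^sup>L ?M (Gf w y)"
  have Q: "(\<lambda>n. real (card (Pi_S L_T (p (Suc n)) (Suc n) w)) / real (Suc n) ^ Suc b) \<longlonglongrightarrow> J"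
    using R(2) unfolding sumeq cI J_def .
  have yr: "y ^ (r + 1) \<noteq> 0" using assms(2) by simp
  have L: "(\<lambda>n. (real (card (Pi_S L_T (p (Suc n)) (Suc n) w)) / real (Suc n) ^ Suc b)
         / (real (p (Suc n)) / real (Suc n)) ^ (r + 1)) \<longlonglongrightarrow> J / y ^ (r + 1)"
    by (intro tendsto_divide Q tendsto_power py yr)
  have eq: "(real (card (Pi_S L_T (p (Suc n)) (Suc n) w)) / real (Suc n) ^ Suc b)
         / (real (p (Suc n)) / real (Suc n)) ^ (r + 1)
       = real (card (Pi_S L_T (p (Suc n)) (Suc n) w)) / (real (p (Suc n)) ^ (r + 1) * real (Suc n) ^ (b - r))" for n
  proof -
    have sb: "Suc b = (r + 1) + (b - r)" using rb by simp
    define N where "N = real (Suc n)"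
    define P where "P = real (p (Suc n))"
    define c where "c = real (card (Pi_S L_T (p (Suc n)) (Suc n) w))"
    have Npos: "0 < N" by (simp add: N_def)
    have "c / N ^ ((r + 1) + (b - r)) / (P / N) ^ (r + 1) = c / (P ^ (r + 1) * N ^ (b - r))"
    proof (cases "P = 0")
      case True then show ?thesis by simp
    next
      case False then show ?thesis using Npos by (simp add: power_add power_divide field_simps)
    qed
    then show ?thesis unfolding N_def P_def c_def sb[symmetric] .
  qed
  have main: "(\<lambda>n. real (card (Pi_S L_T (p n) n w)) / (real (p n) ^ (r + 1) * real n ^ (b - r))) \<longlonglongrightarrow> J / y ^ (r + 1)"
    by (rule LIMSEQ_imp_Suc) (use L in \<open>simp only: eq\<close>)
  show ?thesis
  proof (intro exI conjI impI)
    show "(\<lambda>n. real (card (Pi_S L_T (p n) n w)) / (real (p n) ^ (r + 1) * real n ^ (b - r))) \<longlonglongrightarrow> J / y ^ (r + 1)"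
      by (rule main)
  next
    assume "even_word w"
    then have "0 < J" unfolding J_def by (rule Gf_pos[OF _ assms(2) R(1)])
    then show "0 < J / y ^ (r + 1)" using assms(2) by simp
  next
    assume "\<not> even_word w"
    then have "J = 0" unfolding J_def by (rule Gf_zero)
    then show "J / y ^ (r + 1) = 0" by simp
  qed
qed


end
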